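(* For $0\le r\le\min\{m,n\}$, the monomials $\mathfrak{m}(\mathcal{R})$ for $\mathcal{R}\in\bigsqcup_{d=0}^{r}\mathcal{Z}_{n,m,d}$ descend to a spanning set of $R(\mathcal{Z}_{n,m,r})$. In particular $R(\mathcal{Z}_{n,m,r})_d=\{0\}$ for $d>r$.
   Context: Fix positive integers $n,m$. $\mathbb{C}[\mathbf{x}_{n\times m}]$ is the polynomial ring in variables $x_{i,j}$ ($1\le i\le n,1\le j\le m$). For finite $\mathcal{Z}\subseteq\mathrm{Mat}_{n\times m}(\mathbb{C})$, $\mathbf{I}(\mathcal{Z})$ is its vanishing ideal, $\mathrm{gr}\,\mathbf{I}(\mathcal{Z})$ the ideal generated by top-degree homogeneous components of its nonzero elements, and $R(\mathcal{Z})=\mathbb{C}[\mathbf{x}_{n\times m}]/\mathrm{gr}\,\mathbf{I}(\mathcal{Z})$, graded by degree. A rook placement on the $n\times m$ board is a subset $\mathcal{R}\subseteq[n]\times[m]$ with at most one element in each row and column, identified with its $0/1$ matrix; $\mathcal{Z}_{n,m,d}$ is the set of rook placements with exactly $d$ elements; $\mathfrak{m}(\mathcal{R}):=\prod_{(i,j)\in\mathcal{R}}x_{i,j}$. *)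

theory Defs
  imports "HOL-Analysis.Analysis" "HOL-Library.Poly_Mapping"
begin

text \<open>Multivariate polynomials in variables x_(i,j), i,j positive naturals, over the
complex numbers: finitely supported maps from exponent vectors (finitely supported
maps from variable indices (i,j) to exponents) to coefficients.\<close>

type_synonym monom = "(nat \<times> nat) \<Rightarrow>\<^sub>0 nat"
type_synonym mpoly = "monom \<Rightarrow>\<^sub>0 complex"

definition poly_ring :: "nat \<Rightarrow> nat \<Rightarrow> mpoly set" where
  "poly_ring n m = {p. \<forall>a \<in> Poly_Mapping.keys p. Poly_Mapping.keys a \<subseteq> {1..n} \<times> {1..m}}"

text \<open>Matrices are represented as functions of (row, column).\<close>
definition eval_mpoly :: "mpoly \<Rightarrow> (nat \<Rightarrow> nat \<Rightarrow> complex) \<Rightarrow> complex" where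
  "eval_mpoly p A = (\<Sum>a\<in>Poly_Mapping.keys p. Poly_Mapping.lookup p a * (\<Prod>v\<in>Poly_Mapping.keys a. A (fst v) (snd v) ^ Poly_Mapping.lookup a v))"

definition mdeg :: "monom \<Rightarrow> nat" where
  "mdeg a = (\<Sum>v\<in>Poly_Mapping.keys a. Poly_Mapping.lookup a v)"

definition pdeg :: "mpoly \<Rightarrow> nat" where
  "pdeg p = Max (mdeg ` Poly_Mapping.keys p)"

definition top_comp :: "mpoly \<Rightarrow> mpoly" where
  "top_comp p = (\<Sum>a\<in>Poly_Mapping.keys p. if mdeg a = pdeg p then Poly_Mapping.single a (Poly_Mapping.lookup p a) else 0)"

definition homogeneous :: "nat \<Rightarrow> mpoly \<Rightarrow> bool" where
  "homogeneous d p \<longleftrightarrow> (\<forall>a\<in>Poly_Mapping.keys p. mdeg a = d)"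

definition vanishing_ideal :: "nat \<Rightarrow> nat \<Rightarrow> (nat \<Rightarrow> nat \<Rightarrow> complex) set \<Rightarrow> mpoly set" where
  "vanishing_ideal n m Z = {p \<in> poly_ring n m. \<forall>A\<in>Z. eval_mpoly p A = 0}"

definition ideal_gen :: "nat \<Rightarrow> nat \<Rightarrow> mpoly set \<Rightarrow> mpoly set" where
  "ideal_gen n m S = {p. \<exists>(N::nat) (c::nat \<Rightarrow> mpoly) (f::nat \<Rightarrow> mpoly). (\<forall>k<N. c k \<in> poly_ring n m \<and> f k \<in> S) \<and> p = (\<Sum>k<N. c k * f k)}"

definition gr_ideal :: "nat \<Rightarrow> nat \<Rightarrow> mpoly set \<Rightarrow> mpoly set" where
  "gr_ideal n m I = ideal_gen n m (top_comp ` (I - {0}))"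

definition rook_placement :: "nat \<Rightarrow> nat \<Rightarrow> (nat \<times> nat) set \<Rightarrow> bool" where
  "rook_placement n m R \<longleftrightarrow> R \<subseteq> {1..n} \<times> {1..m} \<and>
     (\<forall>i j i' j'. (i, j) \<in> R \<longrightarrow> (i', j') \<in> R \<longrightarrow> (i = i' \<longleftrightarrow> j = j'))"

definition rook_matrix :: "(nat \<times> nat) set \<Rightarrow> nat \<Rightarrow> nat \<Rightarrow> complex" where
  "rook_matrix R i j = (if (i, j) \<in> R then 1 else 0)"

definition Z_rook :: "nat \<Rightarrow> nat \<Rightarrow> nat \<Rightarrow> (nat \<Rightarrow> nat \<Rightarrow> complex) set" where
  "Z_rook n m d = rook_matrix ` {R. rook_placement n m R \<and> card R = d}"

definition rook_monomial :: "(nat \<times> nat) set \<Rightarrow> mpoly" where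
  "rook_monomial R = Poly_Mapping.single (\<Sum>v\<in>R. Poly_Mapping.single v 1) 1"

definition const_mpoly :: "complex \<Rightarrow> mpoly" where
  "const_mpoly c = Poly_Mapping.single 0 c"

end

theory Submission imports Defs begin

lemma ideal_gen_zero: "0 \<in> ideal_gen n m S"
  unfolding ideal_gen_def mem_Collect_eq by (rule exI[of _ 0]) auto

lemma ideal_gen_add:
  assumes "p \<in> ideal_gen n m S" "q \<in> ideal_gen n m S"
  shows "p + q \<in> ideal_gen n m S"
proof -
  obtain N1 :: nat and c1 f1 where 1: "\<forall>k<N1. c1 k \<in> poly_ring n m \<and> f1 k \<in> S" "p = (\<Sum>k<N1. c1 k * f1 k)"
    using assms(1) unfolding ideal_gen_def mem_Collect_eq by (elim exE conjE) (rule that; assumption)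
  obtain N2 :: nat and c2 f2 where 2: "\<forall>k<N2. c2 k \<in> poly_ring n m \<and> f2 k \<in> S" "q = (\<Sum>k<N2. c2 k * f2 k)"
    using assms(2) unfolding ideal_gen_def mem_Collect_eq by (elim exE conjE) (rule that; assumption)
  define c where "c k = (if k < N1 then c1 k else c2 (k - N1))" for k
  define f where "f k = (if k < N1 then f1 k else f2 (k - N1))" for k
  have s: "{..<N1+N2} = {..<N1} \<union> {0+N1..<N2+N1}" by auto
  have "(\<Sum>k<N1+N2. c k * f k) = (\<Sum>k<N1. c k * f k) + (\<Sum>k\<in>{0+N1..<N2+N1}. c k * f k)"
    unfolding s by (rule sum.union_disjoint) auto
  also have "(\<Sum>k<N1. c k * f k) = p" using 1 by (simp add: c_def f_def)
  also have "(\<Sum>k\<in>{0+N1..<N2+N1}. c k * f k) = (\<Sum>k=0..<N2. c (k+N1) * f (k+N1))"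
    by (rule sum.shift_bounds_nat_ivl)
  also have "\<dots> = q" using 2 by (simp add: c_def f_def atLeast0LessThan)
  finally have "p + q = (\<Sum>k<N1+N2. c k * f k)" by simp
  moreover have "\<forall>k<N1+N2. c k \<in> poly_ring n m \<and> f k \<in> S"
    using 1(1) 2(1) by (auto simp: c_def f_def)
  ultimately show ?thesis unfolding ideal_gen_def mem_Collect_eq by (intro exI[of _ "N1+N2"] exI[of _ c] exI[of _ f]) simp
qed

lemma ideal_gen_sum:
  assumes "finite A" "\<And>a. a \<in> A \<Longrightarrow> g a \<in> ideal_gen n m S"
  shows "sum g A \<in> ideal_gen n m S"
  using assms by (induction A rule: finite_induct) (auto intro: ideal_gen_zero ideal_gen_add)

lemma ideal_gen_gen:
  assumes "c \<in> poly_ring n m" "f \<in> S"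
  shows "c * f \<in> ideal_gen n m S"
  unfolding ideal_gen_def
  by (rule CollectI, rule exI[of _ 1], rule exI[of _ "\<lambda>_. c"], rule exI[of _ "\<lambda>_. f"]) (use assms in auto)

definition ind :: "(nat \<times> nat) set \<Rightarrow> monom" where
  "ind R = (\<Sum>v\<in>R. Poly_Mapping.single v 1)"

lemma lookup_ind: "finite R \<Longrightarrow> Poly_Mapping.lookup (ind R) x = (if x \<in> R then 1 else 0)"
  unfolding ind_def lookup_sum lookup_single by (simp add: when_def)

lemma keys_ind: "finite R \<Longrightarrow> Poly_Mapping.keys (ind R) = R"
  by (auto simp: in_keys_iff lookup_ind split: if_splits)

lemma mdeg_ind: "finite R \<Longrightarrow> mdeg (ind R) = card R"
  unfolding mdeg_def by (simp add: keys_ind lookup_ind)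

lemma squarefree_ind:
  assumes "\<forall>v\<in>Poly_Mapping.keys a. Poly_Mapping.lookup a v = 1"
  shows "a = ind (Poly_Mapping.keys a)"
  by (rule poly_mapping_eqI) (use assms in \<open>auto simp: lookup_ind in_keys_iff\<close>)

lemma mdeg_single: "k \<noteq> 0 \<Longrightarrow> mdeg (Poly_Mapping.single v k) = k"
  unfolding mdeg_def by simp

lemma lookup_sum_single:
  "finite A \<Longrightarrow> Poly_Mapping.lookup (\<Sum>a\<in>A. Poly_Mapping.single a (f a)) x = (if x \<in> A then f x else 0)"
  unfolding lookup_sum lookup_single by (simp add: when_def)

lemma eval_superset:
  assumes "finite K" "Poly_Mapping.keys p \<subseteq> K"
  shows "eval_mpoly p A = (\<Sum>a\<in>K. Poly_Mapping.lookup p a * (\<Prod>v\<in>Poly_Mapping.keys a. A (fst v) (snd v) ^ Poly_Mapping.lookup a v))"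
  unfolding eval_mpoly_def
  by (rule sum.mono_neutral_left) (use assms in \<open>auto simp: in_keys_iff\<close>)

lemma eval_diff: "eval_mpoly (p - q) A = eval_mpoly p A - eval_mpoly q A"
proof -
  let ?K = "Poly_Mapping.keys p \<union> Poly_Mapping.keys q"
  have k: "Poly_Mapping.keys (p - q) \<subseteq> ?K" by (auto simp: in_keys_iff lookup_minus)
  show ?thesis
    by (subst (1 2 3) eval_superset[where K = ?K]) (use k in \<open>auto simp: lookup_minus sum_subtractf left_diff_distrib\<close>)
qed

lemma eval_single: "eval_mpoly (Poly_Mapping.single a c) A = c * (\<Prod>v\<in>Poly_Mapping.keys a. A (fst v) (snd v) ^ Poly_Mapping.lookup a v)"
  unfolding eval_mpoly_def by simp

lemma top_comp_single: "top_comp (Poly_Mapping.single a c) = Poly_Mapping.single a c"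
  unfolding top_comp_def pdeg_def by simp

lemma rook_sub:
  assumes "rook_placement n m R" "S \<subseteq> R" shows "rook_placement n m S"
proof -
  have 1: "R \<subseteq> {1..n} \<times> {1..m}" and 2: "\<And>i j i' j'. (i, j) \<in> R \<Longrightarrow> (i', j') \<in> R \<Longrightarrow> (i = i' \<longleftrightarrow> j = j')"
    using assms(1) unfolding rook_placement_def by auto
  show ?thesis unfolding rook_placement_def
  proof (intro conjI allI impI)
    show "S \<subseteq> {1..n} \<times> {1..m}" using 1 assms(2) by (rule subset_trans[rotated])
    fix i j i' j' assume "(i, j) \<in> S" "(i', j') \<in> S"
    then have "(i, j) \<in> R" "(i', j') \<in> R" using assms(2) by auto
    then show "(i = i') = (j = j')" by (rule 2)
  qed
qed

lemma rook_finite: "rook_placement n m R \<Longrightarrow> finite R"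
  unfolding rook_placement_def by (meson finite_SigmaI finite_atLeastAtMost finite_subset)

lemma bad:
  assumes box: "Poly_Mapping.keys a \<subseteq> {1..n} \<times> {1..m}"
    and notM: "a \<notin> ind ` {R. rook_placement n m R \<and> card R \<le> r}"
  shows "Poly_Mapping.single a k \<in> gr_ideal n m (vanishing_ideal n m (Z_rook n m r))"
proof (cases "\<forall>v\<in>Poly_Mapping.keys a. Poly_Mapping.lookup a v = 1")
  case True
  have aeq: "a = ind (Poly_Mapping.keys a)" using squarefree_ind[OF True] .
  let ?f = "Poly_Mapping.single a (1::complex)"
  have "?f \<in> vanishing_ideal n m (Z_rook n m r)"
    unfolding vanishing_ideal_def
  proof (intro CollectI conjI ballI)
    show "?f \<in> poly_ring n m" using box unfolding poly_ring_def by simp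
    fix A assume "A \<in> Z_rook n m r"
    then obtain R where R: "rook_placement n m R" "card R = r" "A = rook_matrix R"
      unfolding Z_rook_def by auto
    have "\<exists>v\<in>Poly_Mapping.keys a. v \<notin> R"
    proof (rule ccontr)
      assume "\<not> ?thesis"
      then have sub: "Poly_Mapping.keys a \<subseteq> R" by blast
      have "rook_placement n m (Poly_Mapping.keys a)" using rook_sub[OF R(1) sub] .
      moreover have "card (Poly_Mapping.keys a) \<le> r"
        using card_mono[OF rook_finite[OF R(1)] sub] R(2) by simp
      ultimately show False using notM aeq by blast
    qed
    then obtain v where v: "v \<in> Poly_Mapping.keys a" "v \<notin> R" by blast
    have "A (fst v) (snd v) ^ Poly_Mapping.lookup a v = 0"
      using v True R(3) by (cases v) (simp add: rook_matrix_def)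
    then have "(\<Prod>v\<in>Poly_Mapping.keys a. A (fst v) (snd v) ^ Poly_Mapping.lookup a v) = 0"
      using v(1) by (intro prod_zero) auto
    then show "eval_mpoly ?f A = 0" by (simp add: eval_single)
  qed
  moreover have "?f \<noteq> 0"
  proof
    assume "?f = 0"
    then have "Poly_Mapping.lookup ?f a = 0" by simp
    then show False by simp
  qed
  ultimately have g: "?f \<in> top_comp ` (vanishing_ideal n m (Z_rook n m r) - {0})"
    by (intro image_eqI[where x="?f"]) (simp_all add: top_comp_single)
  have "Poly_Mapping.single 0 k \<in> poly_ring n m" unfolding poly_ring_def by simp
  from ideal_gen_gen[OF this g] show ?thesis
    unfolding gr_ideal_def by (simp add: mult_single)
next
  case False
  then obtain v where v: "v \<in> Poly_Mapping.keys a" "Poly_Mapping.lookup a v \<noteq> 1" by blast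
  then have v2: "Poly_Mapping.lookup a v \<ge> 2" by (simp add: in_keys_iff)
  define s2 where "s2 = Poly_Mapping.single v (2::nat)"
  define s1 where "s1 = Poly_Mapping.single v (1::nat)"
  have "Poly_Mapping.lookup s2 v \<noteq> Poly_Mapping.lookup s1 v" by (simp add: s2_def s1_def)
  then have ne: "s2 \<noteq> s1" by auto
  let ?q = "Poly_Mapping.single s2 (1::complex) - Poly_Mapping.single s1 1"
  have lq: "Poly_Mapping.lookup ?q x = (if x = s2 then 1 else if x = s1 then -1 else 0)" for x
    using ne by (auto simp: lookup_minus lookup_single when_def)
  have kq: "Poly_Mapping.keys ?q = {s2, s1}"
    by (auto simp: in_keys_iff lq split: if_splits)
  have md2: "mdeg s2 = 2" and md1: "mdeg s1 = 1" unfolding s2_def s1_def by (simp_all add: mdeg_single)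
  have pq: "pdeg ?q = 2" unfolding pdeg_def kq using md2 md1 by simp
  have tq: "top_comp ?q = Poly_Mapping.single s2 1"
    unfolding top_comp_def kq pq using ne md1 md2 lq by simp
  have vbox: "v \<in> {1..n} \<times> {1..m}" using v box by blast
  have "?q \<in> vanishing_ideal n m (Z_rook n m r)"
    unfolding vanishing_ideal_def
  proof (intro CollectI conjI ballI)
    show "?q \<in> poly_ring n m" unfolding poly_ring_def mem_Collect_eq kq using vbox by (auto simp: s2_def s1_def)
    fix A assume "A \<in> Z_rook n m r"
    then obtain R where R: "A = rook_matrix R"
      unfolding Z_rook_def by auto
    have "A (fst v) (snd v) ^ 2 - A (fst v) (snd v) = 0"
      using R by (simp add: rook_matrix_def)
    then show "eval_mpoly ?q A = 0"
      by (simp add: eval_diff eval_single s2_def s1_def)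
  qed
  moreover have "?q \<noteq> 0"
  proof
    assume "?q = 0"
    then have "Poly_Mapping.lookup ?q s2 = 0" by simp
    then show False using lq[of s2] by simp
  qed
  ultimately have g: "Poly_Mapping.single s2 1 \<in> top_comp ` (vanishing_ideal n m (Z_rook n m r) - {0})"
    by (intro image_eqI[where x="?q"]) (simp_all add: tq)
  have ks: "Poly_Mapping.keys (a - s2) \<subseteq> Poly_Mapping.keys a"
    by (auto simp: in_keys_iff lookup_minus)
  have c: "Poly_Mapping.single (a - s2) k \<in> poly_ring n m"
    using box ks unfolding poly_ring_def by auto
  have eq: "a - s2 + s2 = a"
    by (rule poly_mapping_eqI) (use v2 in \<open>auto simp: lookup_add lookup_minus s2_def lookup_single when_def\<close>)
  have "Poly_Mapping.single (a - s2) k * Poly_Mapping.single s2 1 = Poly_Mapping.single a k"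
    unfolding mult_single eq by simp
  with ideal_gen_gen[OF c g] show ?thesis
    unfolding gr_ideal_def by simp
qed


theorem mainTheorem7:
  fixes n m r :: nat
  assumes "1 \<le> n" and "1 \<le> m" and "r \<le> min m n"
  shows "(\<forall>p \<in> poly_ring n m. \<exists>c :: (nat \<times> nat) set \<Rightarrow> complex.
            p - (\<Sum>R\<in>{R. rook_placement n m R \<and> card R \<le> r}. const_mpoly (c R) * rook_monomial R)
              \<in> gr_ideal n m (vanishing_ideal n m (Z_rook n m r)))
       \<and> (\<forall>d > r. \<forall>p \<in> poly_ring n m. homogeneous d p \<longrightarrow>
            p \<in> gr_ideal n m (vanishing_ideal n m (Z_rook n m r)))"
proof (intro conjI ballI allI impI)
  let ?G = "gr_ideal n m (vanishing_ideal n m (Z_rook n m r))"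
  let ?Rk = "{R. rook_placement n m R \<and> card R \<le> r}"
  let ?M = "ind ` ?Rk"
  have finRk: "finite ?Rk"
  proof (rule finite_subset)
    show "?Rk \<subseteq> Pow ({1..n} \<times> {1..m})" unfolding rook_placement_def by auto
  qed auto
  have inj: "inj_on ind ?Rk"
  proof (rule inj_onI)
    fix R S assume "R \<in> ?Rk" "S \<in> ?Rk" "ind R = ind S"
    then show "R = S" using keys_ind rook_finite by (metis (no_types, lifting) mem_Collect_eq)
  qed
  have finM: "finite ?M" using finRk by simp
  {
    fix p assume p: "p \<in> poly_ring n m"
    fix a assume "a \<in> Poly_Mapping.keys p" "a \<notin> ?M"
    then have "Poly_Mapping.single a (Poly_Mapping.lookup p a) \<in> ?G"
      using p by (intro bad) (auto simp: poly_ring_def)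
  } note badp = this
  show "\<exists>c. p - (\<Sum>R\<in>?Rk. const_mpoly (c R) * rook_monomial R) \<in> ?G"
    if p: "p \<in> poly_ring n m" for p
  proof (intro exI)
    have "(\<Sum>R\<in>?Rk. const_mpoly (Poly_Mapping.lookup p (ind R)) * rook_monomial R)
        = (\<Sum>R\<in>?Rk. Poly_Mapping.single (ind R) (Poly_Mapping.lookup p (ind R)))"
      by (simp add: const_mpoly_def rook_monomial_def mult_single ind_def)
    also have "\<dots> = (\<Sum>a\<in>?M. Poly_Mapping.single a (Poly_Mapping.lookup p a))"
      using sum.reindex[OF inj, of "\<lambda>a. Poly_Mapping.single a (Poly_Mapping.lookup p a)"] by simp
    finally have e: "(\<Sum>R\<in>?Rk. const_mpoly (Poly_Mapping.lookup p (ind R)) * rook_monomial R)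
        = (\<Sum>a\<in>?M. Poly_Mapping.single a (Poly_Mapping.lookup p a))" .
    have "p - (\<Sum>a\<in>?M. Poly_Mapping.single a (Poly_Mapping.lookup p a))
        = (\<Sum>a\<in>Poly_Mapping.keys p - ?M. Poly_Mapping.single a (Poly_Mapping.lookup p a))"
      by (rule poly_mapping_eqI) (use finM in \<open>auto simp: lookup_minus lookup_sum_single in_keys_iff\<close>)
    also have "\<dots> \<in> ?G"
      unfolding gr_ideal_def by (rule ideal_gen_sum) (use badp p in \<open>auto simp: gr_ideal_def\<close>)
    finally show "p - (\<Sum>R\<in>?Rk. const_mpoly (Poly_Mapping.lookup p (ind R)) * rook_monomial R) \<in> ?G"
      unfolding e .
  qed
  fix d p assume d: "r < d" and p: "p \<in> poly_ring n m" and h: "homogeneous d p"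
  have "p = (\<Sum>a\<in>Poly_Mapping.keys p. Poly_Mapping.single a (Poly_Mapping.lookup p a))"
    by (rule poly_mapping_eqI) (auto simp: lookup_sum_single in_keys_iff)
  also have "\<dots> \<in> ?G"
    unfolding gr_ideal_def
  proof (rule ideal_gen_sum)
    fix a assume a: "a \<in> Poly_Mapping.keys p"
    have "a \<notin> ?M"
    proof
      assume "a \<in> ?M"
      then obtain R where "R \<in> ?Rk" "a = ind R" by blast
      then have "mdeg a \<le> r" using mdeg_ind rook_finite by auto
      moreover have "mdeg a = d" using h a unfolding homogeneous_def by auto
      ultimately show False using d by simp
    qed
    then show "Poly_Mapping.single a (Poly_Mapping.lookup p a) \<in> ideal_gen n m (top_comp ` (vanishing_ideal n m (Z_rook n m r) - {0}))"
      using badp p a unfolding gr_ideal_def by blast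
  qed simp
  finally show "p \<in> ?G" .
qed

end
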